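(* Let $1<p<\infty$ and $\theta>0$. There exists a weight function $a$ on $\mathbb R$ such that the dual space $(L_a^{p),\theta}(\mathbb R))^*$ is not canonically isometric to the associate space $(L_a^{p),\theta}(\mathbb R))'$.
   Context: A weight function on $\mathbb R^n$ is a positive, measurable, locally integrable function (vanishing at most on a set of measure zero). For $1<p<\infty$, $\theta\ge 0$ and a weight $a$, the generalized grand Lebesgue space $L_a^{p),\theta}(\mathbb R^n)$ is the space of measurable $f$ with $\|f\|_{L_a^{p),\theta}}=\sup_{0<\varepsilon\le p-1}\varepsilon^{\theta}\Big(\int_{\mathbb R^n}|f(x)|^{p-\varepsilon}a(x)^{\varepsilon/p}\,dx\Big)^{1/(p-\varepsilon)}<\infty$. The associate space $X'$ of a Banach function space $X$ is the space of measurable $g$ with $\|g\|_{X'}=\sup\{\int|fg|\,dx:\|f\|_X\le1\}<\infty$; it embeds canonically into $X^*$ via $g\mapsto(f\mapsto\int fg\,dx)$. *)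

theory Defs
  imports "HOL-Analysis.Analysis"
begin

definition weight :: "(real \<Rightarrow> real) \<Rightarrow> bool" where
  "weight a \<longleftrightarrow> a \<in> borel_measurable lebesgue \<and> (\<forall>x. 0 \<le> a x)
     \<and> (AE x in lebesgue. 0 < a x)
     \<and> (\<forall>K. compact K \<longrightarrow> set_integrable lebesgue K a)"

definition gl_term :: "real \<Rightarrow> real \<Rightarrow> (real \<Rightarrow> real) \<Rightarrow> (real \<Rightarrow> real) \<Rightarrow> real \<Rightarrow> real" where
  "gl_term p \<theta> a f \<epsilon> = \<epsilon> powr \<theta> *
     (\<integral>x. \<bar>f x\<bar> powr (p - \<epsilon>) * a x powr (\<epsilon> / p) \<partial>lebesgue) powr (1 / (p - \<epsilon>))"

definition in_GL :: "real \<Rightarrow> real \<Rightarrow> (real \<Rightarrow> real) \<Rightarrow> (real \<Rightarrow> real) \<Rightarrow> bool" where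
  "in_GL p \<theta> a f \<longleftrightarrow> f \<in> borel_measurable lebesgue \<and>
     (\<forall>\<epsilon>\<in>{0<..p-1}. integrable lebesgue (\<lambda>x. \<bar>f x\<bar> powr (p - \<epsilon>) * a x powr (\<epsilon> / p))) \<and>
     bdd_above (gl_term p \<theta> a f ` {0<..p-1})"

definition GL_norm :: "real \<Rightarrow> real \<Rightarrow> (real \<Rightarrow> real) \<Rightarrow> (real \<Rightarrow> real) \<Rightarrow> real" where
  "GL_norm p \<theta> a f = (SUP \<epsilon>\<in>{0<..p-1}. gl_term p \<theta> a f \<epsilon>)"

definition in_assoc :: "real \<Rightarrow> real \<Rightarrow> (real \<Rightarrow> real) \<Rightarrow> (real \<Rightarrow> real) \<Rightarrow> bool" where
  "in_assoc p \<theta> a g \<longleftrightarrow> g \<in> borel_measurable lebesgue \<and>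
     (\<forall>f. in_GL p \<theta> a f \<and> GL_norm p \<theta> a f \<le> 1 \<longrightarrow> integrable lebesgue (\<lambda>x. f x * g x)) \<and>
     bdd_above ((\<lambda>f. \<integral>x. \<bar>f x * g x\<bar> \<partial>lebesgue) ` {f. in_GL p \<theta> a f \<and> GL_norm p \<theta> a f \<le> 1})"

definition assoc_norm :: "real \<Rightarrow> real \<Rightarrow> (real \<Rightarrow> real) \<Rightarrow> (real \<Rightarrow> real) \<Rightarrow> real" where
  "assoc_norm p \<theta> a g = (SUP f\<in>{f. in_GL p \<theta> a f \<and> GL_norm p \<theta> a f \<le> 1}. \<integral>x. \<bar>f x * g x\<bar> \<partial>lebesgue)"

definition in_dual :: "real \<Rightarrow> real \<Rightarrow> (real \<Rightarrow> real) \<Rightarrow> ((real \<Rightarrow> real) \<Rightarrow> real) \<Rightarrow> bool" where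
  "in_dual p \<theta> a \<Phi> \<longleftrightarrow>
     (\<forall>f g. in_GL p \<theta> a f \<longrightarrow> in_GL p \<theta> a g \<longrightarrow> \<Phi> (\<lambda>x. f x + g x) = \<Phi> f + \<Phi> g) \<and>
     (\<forall>f c. in_GL p \<theta> a f \<longrightarrow> \<Phi> (\<lambda>x. c * f x) = c * \<Phi> f) \<and>
     (\<exists>C. \<forall>f. in_GL p \<theta> a f \<longrightarrow> \<bar>\<Phi> f\<bar> \<le> C * GL_norm p \<theta> a f)"

definition dual_norm :: "real \<Rightarrow> real \<Rightarrow> (real \<Rightarrow> real) \<Rightarrow> ((real \<Rightarrow> real) \<Rightarrow> real) \<Rightarrow> real" where
  "dual_norm p \<theta> a \<Phi> = (SUP f\<in>{f. in_GL p \<theta> a f \<and> GL_norm p \<theta> a f \<le> 1}. \<bar>\<Phi> f\<bar>)"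

definition canonically_isometric :: "real \<Rightarrow> real \<Rightarrow> (real \<Rightarrow> real) \<Rightarrow> bool" where
  "canonically_isometric p \<theta> a \<longleftrightarrow>
     (\<forall>g. in_assoc p \<theta> a g \<longrightarrow>
        in_dual p \<theta> a (\<lambda>f. \<integral>x. f x * g x \<partial>lebesgue) \<and>
        dual_norm p \<theta> a (\<lambda>f. \<integral>x. f x * g x \<partial>lebesgue) = assoc_norm p \<theta> a g) \<and>
     (\<forall>\<Phi>. in_dual p \<theta> a \<Phi> \<longrightarrow>
        (\<exists>g. in_assoc p \<theta> a g \<and> (\<forall>f. in_GL p \<theta> a f \<longrightarrow> \<Phi> f = (\<integral>x. f x * g x \<partial>lebesgue))))"

end

theory Submission
  imports Defs "HOL-Analysis.Analysis"
begin


lemma exp_ge_pow: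
  fixes t :: real assumes "0 \<le> t" "0 < n"
  shows "(t / real n) ^ n \<le> exp t"
proof -
  have "t / real n \<le> exp (t / real n)"
    using exp_ge_add_one_self[of "t / real n"] by linarith
  then have "(t / real n) ^ n \<le> exp (t / real n) ^ n"
    using assms by (intro power_mono) auto
  also have "\<dots> = exp t"
    using assms by (simp add: exp_of_nat_mult[symmetric])
  finally show ?thesis .
qed

lemma exp_decay_bound:
  fixes y g :: real and n :: nat
  assumes g: "0 < g" and n: "2 \<le> real n * g" and y: "1 \<le> \<bar>y\<bar>"
  shows "exp (- (\<bar>y\<bar> powr g)) \<le> real n ^ n * (1 / y^2)"
proof -
  have n0: "0 < n" using n g by (cases n) auto
  have "(\<bar>y\<bar> powr g / real n) ^ n \<le> exp (\<bar>y\<bar> powr g)"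
    using n0 by (intro exp_ge_pow) auto
  moreover have "(\<bar>y\<bar> powr g / real n) ^ n = \<bar>y\<bar> powr (real n * g) / real n ^ n"
    using y by (simp add: power_divide powr_realpow[symmetric] powr_powr mult.commute)
  moreover have "\<bar>y\<bar> powr 2 \<le> \<bar>y\<bar> powr (real n * g)"
    using y n by (intro powr_mono) auto
  moreover have "\<bar>y\<bar> powr 2 = y^2"
    using y by (simp add: powr_numeral)
  ultimately have "y^2 / real n ^ n \<le> exp (\<bar>y\<bar> powr g)"
    using n0 by (smt (verit) divide_right_mono of_nat_0_less_iff zero_less_power)
  then have "y^2 \<le> exp (\<bar>y\<bar> powr g) * real n ^ n"
    using n0 by (simp add: field_simps)
  then show ?thesis
    using y n0 by (simp add: exp_minus field_simps)
qed

lemma integrable_inv_sq: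
  "integrable lebesgue (\<lambda>x::real. indicator {1..} x * (1 / x^2))"
proof -
  have "((\<lambda>x::real. 1 / x ^ 2) has_integral 1 / (real (2 - 1) * 1 ^ (2 - 1))) {1..}"
    by (rule has_integral_inverse_power_to_inf) auto
  then have "(\<lambda>x::real. 1 / x ^ 2) integrable_on {1..}" by blast
  then have "(\<lambda>x::real. 1 / x ^ 2) absolutely_integrable_on {1..}"
    by (rule nonnegative_absolutely_integrable_1) auto
  then show ?thesis by (simp add: set_integrable_def)
qed

lemma meas_exp_powr[measurable]:
  "(\<lambda>x::real. exp (- (\<bar>x\<bar> powr g))) \<in> borel_measurable lebesgue"
  by (rule measurable_completion) simp

lemma integrable_exp_powr:
  fixes g :: real assumes g: "0 < g"
  shows "integrable lebesgue (\<lambda>x::real. exp (- (\<bar>x\<bar> powr g)))"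
proof -
  define n :: nat where "n = nat \<lceil>2 / g\<rceil> + 1"
  have "2 / g \<le> real n" unfolding n_def by linarith
  then have n: "2 \<le> real n * g" using g by (simp add: field_simps)
  define m where "m = (\<lambda>x::real. indicator {-1..1} x + real n ^ n * (indicator {1..} x * (1 / x^2))
       + real n ^ n * (indicator {1..} (0 + -1 * x) * (1 / (0 + -1 * x)^2)))"
  have i1: "integrable lebesgue (indicator {-1..1::real} :: real \<Rightarrow> real)"
    by (simp add: integrable_indicator_iff)
  have i2: "integrable lebesgue (\<lambda>x::real. indicator {1..} (0 + -1 * x) * (1 / (0 + -1 * x)^2))"
    by (rule lebesgue_integrable_real_affine[OF integrable_inv_sq]) simp
  have im: "integrable lebesgue m"
    unfolding m_def by (intro Bochner_Integration.integrable_add Bochner_Integration.integrable_mult_right i1 i2 integrable_inv_sq)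
  have bd: "norm (exp (- (\<bar>x\<bar> powr g))) \<le> norm (m x)" for x
  proof (cases "\<bar>x\<bar> \<le> 1")
    case True
    have e: "exp (- (\<bar>x\<bar> powr g)) \<le> 1" by simp
    have "1 \<le> m x" using True unfolding m_def by (auto simp: indicator_def)
    then show ?thesis using e
      by (simp only: real_norm_def) (smt (verit) exp_gt_zero)
  next
    case False
    have b: "exp (- (\<bar>x\<bar> powr g)) \<le> real n ^ n * (1 / x^2)"
      using False by (intro exp_decay_bound g n) auto
    have "m x = real n ^ n * (1 / x^2)"
      using False unfolding m_def by (auto simp: indicator_def)
    with b show ?thesis by simp
  qed
  show ?thesis
    by (rule Bochner_Integration.integrable_bound[OF im]) (use bd in \<open>auto intro!: AE_I2\<close>)
qed




lemma exp_powr_eq: "exp (t::real) powr s = exp (s * t)"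
  by (simp add: powr_def)

lemma scale_int:
  fixes g s :: real assumes g: "0 < g" and s: "0 < s"
  shows "integrable lebesgue (\<lambda>x. exp (- (\<bar>x\<bar> powr g)) powr s)"
    and "(\<integral>x. exp (- (\<bar>x\<bar> powr g)) powr s \<partial>lebesgue)
          = s powr (- 1 / g) * (\<integral>x. exp (- (\<bar>x\<bar> powr g)) \<partial>lebesgue)"
proof -
  define c where "c = s powr (- 1 / g)"
  have c: "0 < c" unfolding c_def using s by simp
  have eq: "exp (- (\<bar>0 + c * y\<bar> powr g)) powr s = exp (- (\<bar>y\<bar> powr g))" for y
  proof -
    have "\<bar>0 + c * y\<bar> powr g = c powr g * \<bar>y\<bar> powr g"
      using c by (simp add: abs_mult powr_mult)
    also have "c powr g = s powr (-1)"
      unfolding c_def using g s by (simp add: powr_powr)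
    finally have "s * \<bar>0 + c * y\<bar> powr g = \<bar>y\<bar> powr g"
      using s by (simp add: powr_minus field_simps)
    then show ?thesis by (simp add: exp_powr_eq)
  qed
  have eq': "exp (- (\<bar>c * y\<bar> powr g)) powr s = exp (- (\<bar>y\<bar> powr g))" for y
    using eq[of y] by simp
  have "integrable lebesgue (\<lambda>y. exp (- (\<bar>0 + c * y\<bar> powr g)) powr s)"
    unfolding eq by (rule integrable_exp_powr[OF g])
  then show "integrable lebesgue (\<lambda>x. exp (- (\<bar>x\<bar> powr g)) powr s)"
    using lebesgue_integrable_real_affine_iff[of c "\<lambda>x. exp (- (\<bar>x\<bar> powr g)) powr s" 0] c by simp
  have "(\<integral>x. exp (- (\<bar>x\<bar> powr g)) powr s \<partial>lebesgue)
      = \<bar>c\<bar> *\<^sub>R (\<integral>y. exp (- (\<bar>0 + c * y\<bar> powr g)) powr s \<partial>lebesgue)"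
    using c by (intro lebesgue_integral_real_affine) simp
  also have "\<dots> = c * (\<integral>x. exp (- (\<bar>x\<bar> powr g)) \<partial>lebesgue)"
    using c by (simp add: eq')
  finally show "(\<integral>x. exp (- (\<bar>x\<bar> powr g)) powr s \<partial>lebesgue)
          = s powr (- 1 / g) * (\<integral>x. exp (- (\<bar>x\<bar> powr g)) \<partial>lebesgue)"
    unfolding c_def .
qed

lemma C0_pos:
  fixes g :: real assumes g: "0 < g"
  shows "0 < (\<integral>x. exp (- (\<bar>x\<bar> powr g)) \<partial>lebesgue)"
proof -
  have i: "integrable lebesgue (\<lambda>x::real. exp (- (\<bar>x\<bar> powr g)))" by (rule integrable_exp_powr[OF g])
  have "0 \<le> (\<integral>x. exp (- (\<bar>x\<bar> powr g)) \<partial>lebesgue)" by simp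
  moreover have "(\<integral>x. exp (- (\<bar>x\<bar> powr g)) \<partial>lebesgue) \<noteq> 0"
  proof
    assume "(\<integral>x. exp (- (\<bar>x\<bar> powr g)) \<partial>lebesgue) = 0"
    then have "AE x in lebesgue. exp (- (\<bar>x\<bar> powr g)) = (0::real)"
      using integral_nonneg_eq_0_iff_AE[OF i] by simp
    then have "AE (x::real) in lebesgue. False" by simp
    then show False by (metis closed_Collect_const eventually_mono mem_Collect_eq mem_closed_if_AE_lebesgue)
  qed
  ultimately show ?thesis by linarith
qed




lemma le_powr_plus1: fixes x q :: real assumes "0 \<le> x" "1 \<le> q" shows "x \<le> x powr q + 1"
proof (cases "x \<le> 1")
  case True then show ?thesis by (smt (verit) powr_ge_zero)
next
  case False
  then have "x powr 1 \<le> x powr q" using assms by (intro powr_mono) auto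
  then show ?thesis using False by simp
qed

lemma holder_w:
  fixes f w :: "real \<Rightarrow> real" and q :: real
  assumes q: "1 < q"
    and wm[measurable]: "w \<in> borel_measurable lebesgue" and wpos: "\<And>x. 0 < w x"
    and wi: "integrable lebesgue w"
    and fm[measurable]: "f \<in> borel_measurable lebesgue"
    and fi: "integrable lebesgue (\<lambda>x. \<bar>f x\<bar> powr q * w x)"
  shows "integrable lebesgue (\<lambda>x. f x * w x)"
    and "(\<integral>x. \<bar>f x\<bar> * w x \<partial>lebesgue) \<le>
           (\<integral>x. \<bar>f x\<bar> powr q * w x \<partial>lebesgue) powr (1/q) * (\<integral>x. w x \<partial>lebesgue) powr (1 - 1/q)"
proof -
  have bd: "norm (f x * w x) \<le> norm (\<bar>f x\<bar> powr q * w x + w x)" for x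
  proof -
    have "\<bar>f x\<bar> \<le> \<bar>f x\<bar> powr q + 1" using q by (intro le_powr_plus1) auto
    then have "\<bar>f x\<bar> * w x \<le> (\<bar>f x\<bar> powr q + 1) * w x"
      using wpos[of x] by (intro mult_right_mono) auto
    then show ?thesis using wpos[of x] by (simp add: abs_mult distrib_right)
  qed
  have ii: "integrable lebesgue (\<lambda>x. \<bar>f x\<bar> powr q * w x + w x)"
    using fi wi by (rule Bochner_Integration.integrable_add)
  show fwi: "integrable lebesgue (\<lambda>x. f x * w x)"
    by (rule Bochner_Integration.integrable_bound[OF ii]) (use bd in \<open>auto intro!: AE_I2\<close>)
  have afwi: "integrable lebesgue (\<lambda>x. \<bar>f x\<bar> * w x)"
  proof -
    have "(\<lambda>x. \<bar>f x * w x\<bar>) = (\<lambda>x. \<bar>f x\<bar> * w x)"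
      using wpos by (intro ext) (simp add: abs_mult less_imp_le)
    then show ?thesis using integrable_abs[OF fwi] by simp
  qed
  define A where "A = (\<integral>x. \<bar>f x\<bar> powr q * w x \<partial>lebesgue)"
  define B where "B = (\<integral>x. w x \<partial>lebesgue)"
  have A0: "0 \<le> A" unfolding A_def using wpos by (intro integral_nonneg_AE AE_I2) (simp add: less_imp_le)
  have B0: "0 \<le> B" unfolding B_def using wpos by (intro integral_nonneg_AE AE_I2) (simp add: less_imp_le)
  show "(\<integral>x. \<bar>f x\<bar> * w x \<partial>lebesgue) \<le> A powr (1/q) * B powr (1 - 1/q)"
  proof (cases "A = 0")
    case True
    have nn: "AE x in lebesgue. 0 \<le> \<bar>f x\<bar> powr q * w x"
      using wpos by (intro AE_I2) (simp add: less_imp_le)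
    have "AE x in lebesgue. \<bar>f x\<bar> powr q * w x = 0"
      using integral_nonneg_eq_0_iff_AE[OF fi nn] True unfolding A_def by simp
    then have "AE x in lebesgue. \<bar>f x\<bar> * w x = 0"
      by (rule AE_mp) (use wpos in \<open>auto intro!: AE_I2\<close>)
    then have "(\<integral>x. \<bar>f x\<bar> * w x \<partial>lebesgue) = 0"
      by (rule integral_eq_zero_AE)
    then show ?thesis by simp
  next
    case False
    then have Ap: "0 < A" using A0 by simp
    have Bp: "0 < B"
    proof (rule ccontr)
      assume "\<not> 0 < B"
      then have "B = 0" using B0 by simp
      moreover have nn: "AE x in lebesgue. 0 \<le> w x"
        using wpos by (intro AE_I2) (simp add: less_imp_le)
      ultimately have "AE x in lebesgue. w x = 0"
        using integral_nonneg_eq_0_iff_AE[OF wi nn] unfolding B_def by simp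
      then have "AE x in lebesgue. \<bar>f x\<bar> powr q * w x = 0" by (rule AE_mp) (auto intro!: AE_I2)
      then have "A = 0" unfolding A_def
        by (rule integral_eq_zero_AE)
      with Ap show False by simp
    qed
    define q' where "q' = q / (q - 1)"
    have q': "1 < q'" "1/q + 1/q' = 1" using q unfolding q'_def by (auto simp: field_simps)
    define \<alpha> where "\<alpha> = A powr (1/q)"
    define b where "b = B powr (1 - 1/q)"
    have \<alpha>p: "0 < \<alpha>" and bp: "0 < b" unfolding \<alpha>_def b_def using Ap Bp by auto
    have \<alpha>q: "\<alpha> powr q = A" unfolding \<alpha>_def using Ap q by (simp add: powr_powr)
    have bq: "(1/b) powr q' = 1 / B"
    proof -
      have "(1 - 1/q) * q' = 1" unfolding q'_def using q by (simp add: field_simps)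
      then have "b powr q' = B" unfolding b_def using Bp by (simp add: powr_powr)
      then show ?thesis using bp by (simp add: powr_divide)
    qed
    have pt: "\<bar>f x\<bar> * w x / (\<alpha> * b) \<le> (\<bar>f x\<bar> powr q * w x) / (q * A) + w x / (q' * B)" for x
    proof -
      have "(\<bar>f x\<bar> / \<alpha>) * (1/b) \<le> (\<bar>f x\<bar> / \<alpha>) powr q / q + (1/b) powr q' / q'"
        using q q' \<alpha>p bp by (intro Youngs_inequality) auto
      also have "(\<bar>f x\<bar> / \<alpha>) powr q = \<bar>f x\<bar> powr q / A"
        using \<alpha>p \<alpha>q by (simp add: powr_divide)
      finally have "(\<bar>f x\<bar> / \<alpha>) * (1/b) \<le> \<bar>f x\<bar> powr q / A / q + 1 / B / q'"
        using bq by simp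
      then have "(\<bar>f x\<bar> / \<alpha>) * (1/b) * w x \<le> (\<bar>f x\<bar> powr q / A / q + 1 / B / q') * w x"
        using wpos[of x] by (intro mult_right_mono) auto
      then show ?thesis by (simp add: field_simps)
    qed
    have "(\<integral>x. \<bar>f x\<bar> * w x / (\<alpha> * b) \<partial>lebesgue)
        \<le> (\<integral>x. (\<bar>f x\<bar> powr q * w x) / (q * A) + w x / (q' * B) \<partial>lebesgue)"
      using afwi fi wi pt
      by (intro integral_mono Bochner_Integration.integrable_add integrable_divide) auto
    also have "\<dots> = A / (q * A) + B / (q' * B)"
      using fi wi unfolding A_def B_def by simp
    also have "\<dots> = 1" using Ap Bp q' by (simp add: field_simps)
    finally have "(\<integral>x. \<bar>f x\<bar> * w x \<partial>lebesgue) / (\<alpha> * b) \<le> 1" by simp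
    then show ?thesis using \<alpha>p bp unfolding \<alpha>_def b_def by (simp add: field_simps)
  qed
qed




definition ultra :: "'a filter \<Rightarrow> bool" where
  "ultra F \<longleftrightarrow> F \<noteq> bot \<and> (\<forall>P. eventually P F \<or> eventually (\<lambda>x. \<not> P x) F)"

lemma ex_ultra:
  fixes F :: "'a filter"
  assumes F: "F \<noteq> bot"
  shows "\<exists>U. U \<le> F \<and> ultra U"
proof -
  let ?R = "{(b, a). a \<noteq> bot \<and> a \<le> b \<and> b \<le> F}"
  have [simp]: "Field ?R = {G. G \<noteq> bot \<and> G \<le> F}"
    by (auto simp: Field_def bot_unique)
  have "\<exists>m\<in>Field ?R. \<forall>a\<in>Field ?R. (m, a) \<in> ?R \<longrightarrow> a = m"
  proof (rule Zorns_po_lemma)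
    show "Partial_order ?R"
      by (auto simp: partial_order_on_def preorder_on_def
          antisym_def refl_on_def trans_def Field_def bot_unique)
    show "\<exists>u\<in>Field ?R. \<forall>a\<in>C. (a, u) \<in> ?R" if C: "C \<in> Chains ?R" for C
    proof (simp, intro exI conjI ballI)
      have Inf_C: "Inf C \<noteq> bot" "Inf C \<le> F" if "C \<noteq> {}"
      proof -
        from C that have "Inf C = bot \<longleftrightarrow> (\<exists>x\<in>C. x = bot)"
          unfolding trivial_limit_def by (intro eventually_Inf_base) (auto simp: Chains_def)
        with C show "Inf C \<noteq> bot"
          by (auto simp: Chains_def)
        from that obtain x where "x \<in> C" by auto
        with C show "Inf C \<le> F"
          by (auto intro!: Inf_lower2[of x] simp: Chains_def)
      qed
      then have [simp]: "inf F (Inf C) = (if C = {} then F else Inf C)"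
        using C by (auto simp add: inf_absorb2)
      from C show "inf F (Inf C) \<noteq> bot"
        by (simp add: F Inf_C)
      from C show "inf F (Inf C) \<le> F"
        by (simp add: Chains_def Inf_C F)
      with C show "inf F (Inf C) \<le> x" "x \<le> F" if "x \<in> C" for x
        using that by (auto intro: Inf_lower simp: Chains_def)
    qed
  qed
  then obtain U where U: "U \<noteq> bot" "U \<le> F" and max: "\<And>G. G \<noteq> bot \<Longrightarrow> G \<le> U \<Longrightarrow> G = U"
    by auto
  have "ultra U"
    unfolding ultra_def
  proof (intro conjI allI U(1) disjCI)
    fix P assume "\<not> eventually (\<lambda>x. \<not> P x) U"
    then have "inf U (principal {x. P x}) \<noteq> bot"
      by (simp add: trivial_limit_def eventually_inf_principal)
    then have "inf U (principal {x. P x}) = U" by (rule max) simp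
    moreover have "eventually P (inf U (principal {x. P x}))"
      by (simp add: eventually_inf_principal)
    ultimately show "eventually P U" by simp
  qed
  with U show ?thesis by blast
qed

lemma ultra_converges:
  fixes h :: "'a \<Rightarrow> real"
  assumes U: "ultra U" and ev: "eventually (\<lambda>x. \<bar>h x\<bar> \<le> M) U"
  shows "\<exists>l. (h \<longlongrightarrow> l) U"
proof -
  have Ub: "U \<noteq> bot" using U by (simp add: ultra_def)
  have "compact {-M..M}" by simp
  moreover have "filtermap h U \<noteq> bot" using Ub by (simp add: filtermap_bot_iff)
  moreover have "eventually (\<lambda>y. y \<in> {-M..M}) (filtermap h U)"
    using ev by (simp add: eventually_filtermap abs_le_iff) (auto elim: eventually_mono)
  ultimately obtain l where l: "inf (nhds l) (filtermap h U) \<noteq> bot"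
    unfolding compact_filter by blast
  have "(h \<longlongrightarrow> l) U"
    unfolding tendsto_def
  proof (intro allI impI)
    fix S assume "open S" "l \<in> S"
    then have S: "eventually (\<lambda>y. y \<in> S) (nhds l)" by (rule eventually_nhds_in_open)
    show "eventually (\<lambda>x. h x \<in> S) U"
    proof (rule ccontr)
      assume "\<not> eventually (\<lambda>x. h x \<in> S) U"
      with U have "eventually (\<lambda>x. h x \<notin> S) U" by (auto simp: ultra_def)
      then have "eventually (\<lambda>y. y \<notin> S) (filtermap h U)" by (simp add: eventually_filtermap)
      then have "eventually (\<lambda>y. False) (inf (nhds l) (filtermap h U))"
        unfolding eventually_inf using S by blast
      with l show False by (simp add: trivial_limit_def)
    qed
  qed
  then show ?thesis by blast
qed




definition wa :: "real \<Rightarrow> real \<Rightarrow> real \<Rightarrow> real" where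
  "wa p \<theta> x = exp (- (\<bar>x\<bar> powr (1 / (\<theta> * p))))"
definition C0 :: "real \<Rightarrow> real \<Rightarrow> real" where
  "C0 p \<theta> = (\<integral>x. wa p \<theta> x \<partial>lebesgue)"
definition Bw :: "real \<Rightarrow> real \<Rightarrow> real \<Rightarrow> real" where
  "Bw p \<theta> \<epsilon> = (\<integral>x. wa p \<theta> x powr (\<epsilon> / p) \<partial>lebesgue)"
definition lnK :: "real \<Rightarrow> real \<Rightarrow> real" where
  "lnK p \<theta> = ln (C0 p \<theta>) + \<theta> * p * ln p"
definition Lf :: "real \<Rightarrow> real \<Rightarrow> real \<Rightarrow> (real \<Rightarrow> real) \<Rightarrow> real" where
  "Lf p \<theta> \<epsilon> f = \<epsilon> powr \<theta> * Bw p \<theta> \<epsilon> powr (1 / (p - \<epsilon>) - 1)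
      * (\<integral>x. f x * wa p \<theta> x powr (\<epsilon> / p) \<partial>lebesgue)"

lemma neg_x_ln_le: fixes e :: real assumes "0 < e" shows "- (e * ln e) \<le> 1"
proof -
  have "ln (1/e) \<le> 1/e - 1" using assms by (intro ln_le_minus_one) auto
  then have "- ln e \<le> 1/e - 1" using assms by (simp add: ln_div)
  then have "e * (- ln e) \<le> e * (1/e - 1)" using assms by (intro mult_left_mono) auto
  moreover have "e * (1/e - 1) = 1 - e" using assms by (simp add: field_simps)
  ultimately have "- (e * ln e) \<le> 1 - e" by simp
  then show ?thesis using assms by linarith
qed

context
  fixes p \<theta> :: real
  assumes p: "1 < p" and th: "0 < \<theta>"
begin

lemma gpos: "0 < 1 / (\<theta> * p)" using p th by simp

lemma wa_meas[measurable]: "wa p \<theta> \<in> borel_measurable lebesgue"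
  unfolding wa_def by (rule meas_exp_powr)

lemma wpow_meas[measurable]: "(\<lambda>x. wa p \<theta> x powr s) \<in> borel_measurable lebesgue"
  unfolding wa_def by (rule measurable_completion) simp

lemma wa_pos: "0 < wa p \<theta> x" unfolding wa_def by simp
lemma wa_le1: "wa p \<theta> x \<le> 1" unfolding wa_def by simp

lemma wa_int: "integrable lebesgue (wa p \<theta>)"
  unfolding wa_def by (rule integrable_exp_powr[OF gpos])

lemma C0_pos': "0 < C0 p \<theta>"
  unfolding C0_def wa_def by (rule C0_pos[OF gpos])

lemma wpow_int: "0 < s \<Longrightarrow> integrable lebesgue (\<lambda>x. wa p \<theta> x powr s)"
  unfolding wa_def by (rule scale_int(1)[OF gpos])

lemma Bw_eq: assumes "0 < \<epsilon>" shows "Bw p \<theta> \<epsilon> = (\<epsilon> / p) powr (- (\<theta> * p)) * C0 p \<theta>"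
proof -
  have "Bw p \<theta> \<epsilon> = (\<epsilon> / p) powr (- 1 / (1 / (\<theta> * p))) * C0 p \<theta>"
    unfolding Bw_def C0_def wa_def using assms p by (intro scale_int(2)[OF gpos]) simp
  then show ?thesis by simp
qed

lemma Bw_pos: "0 < \<epsilon> \<Longrightarrow> 0 < Bw p \<theta> \<epsilon>"
  using Bw_eq C0_pos' p by simp

lemma gl_one:
  assumes e: "0 < \<epsilon>" "\<epsilon> < p"
  shows "gl_term p \<theta> (wa p \<theta>) (\<lambda>x. 1) \<epsilon> = exp ((- (\<theta> * (\<epsilon> * ln \<epsilon>)) + lnK p \<theta>) / (p - \<epsilon>))"
proof -
  have "gl_term p \<theta> (wa p \<theta>) (\<lambda>x. 1) \<epsilon> = \<epsilon> powr \<theta> * Bw p \<theta> \<epsilon> powr (1 / (p - \<epsilon>))"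
    unfolding gl_term_def Bw_def by simp
  also have "\<dots> = exp (\<theta> * ln \<epsilon>) * exp (ln (Bw p \<theta> \<epsilon>) / (p - \<epsilon>))"
    using e Bw_pos[of \<epsilon>] by (simp add: powr_def)
  also have "ln (Bw p \<theta> \<epsilon>) = - (\<theta> * p) * (ln \<epsilon> - ln p) + ln (C0 p \<theta>)"
    using e p C0_pos' by (simp add: Bw_eq ln_mult ln_powr ln_div)
  also have "exp (\<theta> * ln \<epsilon>) * exp ((- (\<theta> * p) * (ln \<epsilon> - ln p) + ln (C0 p \<theta>)) / (p - \<epsilon>))
      = exp ((- (\<theta> * (\<epsilon> * ln \<epsilon>)) + lnK p \<theta>) / (p - \<epsilon>))"
  proof -
    have "\<theta> * ln \<epsilon> + (- (\<theta> * p) * (ln \<epsilon> - ln p) + ln (C0 p \<theta>)) / (p - \<epsilon>)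
        = (- (\<theta> * (\<epsilon> * ln \<epsilon>)) + lnK p \<theta>) / (p - \<epsilon>)"
      using e unfolding lnK_def by (simp add: field_simps)
    then show ?thesis by (simp add: exp_add[symmetric])
  qed
  finally show ?thesis .
qed

lemma gl_one_upper:
  assumes e: "0 < \<epsilon>" "\<epsilon> \<le> p - 1"
  shows "gl_term p \<theta> (wa p \<theta>) (\<lambda>x. 1) \<epsilon> \<le> exp (\<theta> + \<bar>lnK p \<theta>\<bar>)"
proof -
  define N where "N = - (\<theta> * (\<epsilon> * ln \<epsilon>)) + lnK p \<theta>"
  have "- (\<epsilon> * ln \<epsilon>) \<le> 1" by (rule neg_x_ln_le[OF e(1)])
  then have "\<theta> * (- (\<epsilon> * ln \<epsilon>)) \<le> \<theta> * 1" using th by (intro mult_left_mono) auto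
  then have N: "N \<le> \<theta> + \<bar>lnK p \<theta>\<bar>" unfolding N_def by linarith
  have q: "1 \<le> p - \<epsilon>" using e by simp
  have "N / (p - \<epsilon>) \<le> \<theta> + \<bar>lnK p \<theta>\<bar>"
  proof (cases "0 \<le> N")
    case True
    then have "N / (p - \<epsilon>) \<le> N" using q by (simp add: divide_le_eq) (smt (verit) mult_le_cancel_left1)
    then show ?thesis using N by linarith
  next
    case False
    then have "N / (p - \<epsilon>) \<le> 0" using q by (simp add: divide_le_0_iff)
    then show ?thesis using th by linarith
  qed
  then show ?thesis using gl_one[of \<epsilon>] e by (simp add: N_def)
qed

lemma gl_one_lower:
  assumes e: "0 < \<epsilon>" "\<epsilon> \<le> 1" "\<epsilon> \<le> p - 1"
  shows "exp (- \<bar>lnK p \<theta>\<bar>) \<le> gl_term p \<theta> (wa p \<theta>) (\<lambda>x. 1) \<epsilon>"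
proof -
  define N where "N = - (\<theta> * (\<epsilon> * ln \<epsilon>)) + lnK p \<theta>"
  have "ln \<epsilon> \<le> 0" using e by simp
  then have "\<epsilon> * ln \<epsilon> \<le> 0" using e by (simp add: mult_nonneg_nonpos)
  then have "\<theta> * (\<epsilon> * ln \<epsilon>) \<le> 0" using th by (simp add: mult_nonneg_nonpos)
  then have N: "- \<bar>lnK p \<theta>\<bar> \<le> N" unfolding N_def by linarith
  have q: "0 < p - \<epsilon>" using e by simp
  have "- \<bar>lnK p \<theta>\<bar> \<le> N / (p - \<epsilon>)"
  proof (cases "0 \<le> N")
    case True
    have "0 \<le> N / (p - \<epsilon>)" by (rule divide_nonneg_pos[OF True q])
    then show ?thesis by linarith
  next
    case False
    have "1 \<le> p - \<epsilon>" using e p by simp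
    then have "N \<le> N / (p - \<epsilon>)" using False q by (simp add: le_divide_eq)
    then show ?thesis using N by linarith
  qed
  then show ?thesis using gl_one[of \<epsilon>] e by (simp add: N_def)
qed

end



context
  fixes p \<theta> :: real
  assumes p: "1 < p" and th: "0 < \<theta>"
begin

lemma L_bound:
  assumes e: "0 < \<epsilon>" "\<epsilon> < p - 1"
    and fm[measurable]: "f \<in> borel_measurable lebesgue"
    and fi: "integrable lebesgue (\<lambda>x. \<bar>f x\<bar> powr (p - \<epsilon>) * wa p \<theta> x powr (\<epsilon> / p))"
  shows "integrable lebesgue (\<lambda>x. f x * wa p \<theta> x powr (\<epsilon> / p))"
    and "\<bar>Lf p \<theta> \<epsilon> f\<bar> \<le> gl_term p \<theta> (wa p \<theta>) f \<epsilon>"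
proof -
  define w where "w = (\<lambda>x. wa p \<theta> x powr (\<epsilon> / p))"
  define q where "q = p - \<epsilon>"
  have q: "1 < q" unfolding q_def using e by simp
  have wm: "w \<in> borel_measurable lebesgue" unfolding w_def by (rule wpow_meas[OF p th])
  have wpos: "0 < w x" for x unfolding w_def using wa_pos[OF p th, of x] by simp
  have sp: "0 < \<epsilon> / p" using e p by simp
  have wi: "integrable lebesgue w" unfolding w_def by (rule wpow_int[OF p th sp])
  have fi': "integrable lebesgue (\<lambda>x. \<bar>f x\<bar> powr q * w x)" using fi unfolding q_def w_def .
  note H = holder_w[OF q wm wpos wi fm fi']
  show "integrable lebesgue (\<lambda>x. f x * wa p \<theta> x powr (\<epsilon> / p))" using H(1) unfolding w_def .
  define A where "A = (\<integral>x. \<bar>f x\<bar> powr q * w x \<partial>lebesgue)"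
  define B where "B = (\<integral>x. w x \<partial>lebesgue)"
  have BB: "B = Bw p \<theta> \<epsilon>" unfolding B_def w_def Bw_def ..
  have Bp: "0 < B" using Bw_pos[OF p th e(1)] BB by simp
  have A0: "0 \<le> A" unfolding A_def using wpos by (intro integral_nonneg_AE AE_I2) (simp add: less_imp_le)
  have "\<bar>\<integral>x. f x * w x \<partial>lebesgue\<bar> \<le> (\<integral>x. norm (f x * w x) \<partial>lebesgue)"
    using integral_norm_bound[of lebesgue "\<lambda>x. f x * w x"] by simp
  also have "(\<lambda>x. norm (f x * w x)) = (\<lambda>x. \<bar>f x\<bar> * w x)"
    using wpos by (intro ext) (simp add: abs_mult less_imp_le)
  also have "(\<integral>x. \<bar>f x\<bar> * w x \<partial>lebesgue) \<le> A powr (1/q) * B powr (1 - 1/q)"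
    using H(2) unfolding A_def B_def .
  finally have I: "\<bar>\<integral>x. f x * w x \<partial>lebesgue\<bar> \<le> A powr (1/q) * B powr (1 - 1/q)" .
  have "\<bar>Lf p \<theta> \<epsilon> f\<bar> = \<epsilon> powr \<theta> * B powr (1/q - 1) * \<bar>\<integral>x. f x * w x \<partial>lebesgue\<bar>"
    unfolding Lf_def BB[symmetric] w_def q_def by (simp add: abs_mult)
  also have "\<dots> \<le> \<epsilon> powr \<theta> * B powr (1/q - 1) * (A powr (1/q) * B powr (1 - 1/q))"
    by (intro mult_left_mono I) auto
  also have "\<dots> = \<epsilon> powr \<theta> * A powr (1/q) * (B powr (1/q - 1) * B powr (1 - 1/q))"
    by (simp add: algebra_simps)
  also have "B powr (1/q - 1) * B powr (1 - 1/q) = 1"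
    using Bp by (simp add: powr_add[symmetric])
  also have "\<epsilon> powr \<theta> * A powr (1/q) * 1 = gl_term p \<theta> (wa p \<theta>) f \<epsilon>"
    unfolding gl_term_def A_def w_def q_def by simp
  finally show "\<bar>Lf p \<theta> \<epsilon> f\<bar> \<le> gl_term p \<theta> (wa p \<theta>) f \<epsilon>" .
qed

lemma L_one:
  assumes e: "0 < \<epsilon>" "\<epsilon> < p"
  shows "Lf p \<theta> \<epsilon> (\<lambda>x. 1) = gl_term p \<theta> (wa p \<theta>) (\<lambda>x. 1) \<epsilon>"
proof -
  have Bp: "0 < Bw p \<theta> \<epsilon>" using Bw_pos[OF p th e(1)] .
  have "Lf p \<theta> \<epsilon> (\<lambda>x. 1) = \<epsilon> powr \<theta> * (Bw p \<theta> \<epsilon> powr (1 / (p - \<epsilon>) - 1) * Bw p \<theta> \<epsilon>)"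
    unfolding Lf_def by (simp add: Bw_def)
  also have "Bw p \<theta> \<epsilon> powr (1 / (p - \<epsilon>) - 1) * Bw p \<theta> \<epsilon> = Bw p \<theta> \<epsilon> powr (1 / (p - \<epsilon>))"
  proof -
    have "Bw p \<theta> \<epsilon> powr (1 / (p - \<epsilon>) - 1) * Bw p \<theta> \<epsilon> powr 1 = Bw p \<theta> \<epsilon> powr (1 / (p - \<epsilon>) - 1 + 1)"
      by (rule powr_add[symmetric])
    then show ?thesis using Bp by simp
  qed
  also have "\<epsilon> powr \<theta> * Bw p \<theta> \<epsilon> powr (1 / (p - \<epsilon>)) = gl_term p \<theta> (wa p \<theta>) (\<lambda>x. 1) \<epsilon>"
    unfolding gl_term_def Bw_def by (simp only: abs_one powr_one_eq_one mult_1_left)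
  finally show ?thesis .
qed

lemma small_f:
  assumes fm[measurable]: "f \<in> borel_measurable lebesgue" and c: "0 \<le> c"
    and fb: "\<And>x. \<bar>f x\<bar> \<le> c * wa p \<theta> x"
    and e: "0 < \<epsilon>" "\<epsilon> \<le> p - 1"
  shows "integrable lebesgue (\<lambda>x. \<bar>f x\<bar> powr (p - \<epsilon>) * wa p \<theta> x powr (\<epsilon> / p))"
    and "gl_term p \<theta> (wa p \<theta>) f \<epsilon> \<le> \<epsilon> powr \<theta> * c * max 1 (C0 p \<theta>)"
proof -
  define q where "q = p - \<epsilon>"
  have q: "1 \<le> q" unfolding q_def using e by simp
  have pt: "\<bar>f x\<bar> powr q * wa p \<theta> x powr (\<epsilon> / p) \<le> c powr q * wa p \<theta> x" for x
  proof -
    have w0: "0 < wa p \<theta> x" "wa p \<theta> x \<le> 1" using wa_pos[OF p th] wa_le1[OF p th] by auto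
    have "\<bar>f x\<bar> powr q \<le> (c * wa p \<theta> x) powr q"
      using q fb[of x] by (intro powr_mono2) auto
    also have "\<dots> = c powr q * wa p \<theta> x powr q" using c w0 by (simp add: powr_mult)
    also have "\<dots> \<le> c powr q * wa p \<theta> x"
      using w0 q by (intro mult_left_mono powr_le_one_le) auto
    finally have a: "\<bar>f x\<bar> powr q \<le> c powr q * wa p \<theta> x" .
    have b: "wa p \<theta> x powr (\<epsilon> / p) \<le> 1" using w0 e p by (intro powr_le1) auto
    have "\<bar>f x\<bar> powr q * wa p \<theta> x powr (\<epsilon> / p) \<le> \<bar>f x\<bar> powr q * 1"
      by (intro mult_left_mono b) auto
    with a show ?thesis by simp
  qed
  have ci: "integrable lebesgue (\<lambda>x. c powr q * wa p \<theta> x)"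
    using wa_int[OF p th] by (rule integrable_mult_right)
  have fim: "(\<lambda>x. \<bar>f x\<bar> powr q * wa p \<theta> x powr (\<epsilon> / p)) \<in> borel_measurable lebesgue"
    by (intro borel_measurable_times wpow_meas[OF p th]) measurable
  have fi: "integrable lebesgue (\<lambda>x. \<bar>f x\<bar> powr q * wa p \<theta> x powr (\<epsilon> / p))"
    using fim by (rule Bochner_Integration.integrable_bound[OF ci])
       (use pt in \<open>auto intro!: AE_I2 simp: abs_of_nonneg wa_pos[OF p th] less_imp_le\<close>)
  then show "integrable lebesgue (\<lambda>x. \<bar>f x\<bar> powr (p - \<epsilon>) * wa p \<theta> x powr (\<epsilon> / p))"
    unfolding q_def .
  define A where "A = (\<integral>x. \<bar>f x\<bar> powr q * wa p \<theta> x powr (\<epsilon> / p) \<partial>lebesgue)"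
  have A0: "0 \<le> A" unfolding A_def by (intro integral_nonneg_AE AE_I2) simp
  have "A \<le> (\<integral>x. c powr q * wa p \<theta> x \<partial>lebesgue)"
    unfolding A_def by (rule integral_mono[OF fi ci pt])
  also have "\<dots> = c powr q * C0 p \<theta>" unfolding C0_def by simp
  finally have AC: "A \<le> c powr q * C0 p \<theta>" .
  have "A powr (1/q) \<le> (c powr q * C0 p \<theta>) powr (1/q)"
    using A0 AC q by (intro powr_mono2) auto
  also have "\<dots> = (c powr q) powr (1/q) * C0 p \<theta> powr (1/q)"
    using C0_pos'[OF p th] by (simp add: powr_mult)
  also have "(c powr q) powr (1/q) = c" using c q by (simp add: powr_powr powr_one)
  also have "C0 p \<theta> powr (1/q) \<le> max 1 (C0 p \<theta>)"
  proof (cases "C0 p \<theta> \<le> 1")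
    case True then show ?thesis using C0_pos'[OF p th] q
      by (smt (verit) powr_le1 divide_nonneg_nonneg)
  next
    case False
    then have "C0 p \<theta> powr (1/q) \<le> C0 p \<theta> powr 1" using q by (intro powr_mono) auto
    then show ?thesis using False by simp
  qed
  then have "c * C0 p \<theta> powr (1/q) \<le> c * max 1 (C0 p \<theta>)" using c by (rule mult_left_mono)
  finally have "A powr (1/q) \<le> c * max 1 (C0 p \<theta>)" .
  then have "\<epsilon> powr \<theta> * A powr (1/q) \<le> \<epsilon> powr \<theta> * (c * max 1 (C0 p \<theta>))"
    by (intro mult_left_mono) auto
  then show "gl_term p \<theta> (wa p \<theta>) f \<epsilon> \<le> \<epsilon> powr \<theta> * c * max 1 (C0 p \<theta>)"
    unfolding gl_term_def A_def q_def by (simp add: mult.assoc)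
qed

end



lemma weight_wa: assumes p: "1 < p" and th: "0 < \<theta>" shows "weight (wa p \<theta>)"
  unfolding weight_def
proof (intro conjI allI impI)
  show "wa p \<theta> \<in> borel_measurable lebesgue" by (rule wa_meas[OF p th])
  show "0 \<le> wa p \<theta> x" for x using wa_pos[OF p th, of x] by simp
  show "AE x in lebesgue. 0 < wa p \<theta> x" using wa_pos[OF p th] by simp
  fix K :: "real set" assume "compact K"
  then have "K \<in> sets lebesgue" using lmeasurable_compact by blast
  then show "set_integrable lebesgue K (wa p \<theta>)"
    unfolding set_integrable_def by (rule integrable_mult_indicator[OF _ wa_int[OF p th]])
qed

lemma in_GL_one: assumes p: "1 < p" and th: "0 < \<theta>" shows "in_GL p \<theta> (wa p \<theta>) (\<lambda>x. 1)"
  unfolding in_GL_def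
proof (intro conjI ballI)
  show "(\<lambda>x. 1::real) \<in> borel_measurable lebesgue" by simp
  fix \<epsilon> assume "\<epsilon> \<in> {0<..p - 1}"
  then have "0 < \<epsilon> / p" using p by simp
  then show "integrable lebesgue (\<lambda>x. \<bar>1::real\<bar> powr (p - \<epsilon>) * wa p \<theta> x powr (\<epsilon> / p))"
    using wpow_int[OF p th] by simp
next
  show "bdd_above (gl_term p \<theta> (wa p \<theta>) (\<lambda>x. 1) ` {0<..p - 1})"
    by (rule bdd_aboveI[of _ "exp (\<theta> + \<bar>lnK p \<theta>\<bar>)"]) (auto intro!: gl_one_upper[OF p th])
qed

context
  fixes p \<theta> :: real and U :: "real filter"
  assumes p: "1 < p" and th: "0 < \<theta>" and U: "U \<le> at_right 0" "ultra U"
begin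

lemma Ub: "\<not> trivial_limit U" using U(2) by (simp add: ultra_def)

lemma evR: "eventually (\<lambda>\<epsilon>. 0 < \<epsilon> \<and> \<epsilon> \<le> 1 \<and> \<epsilon> < p - 1) (at_right 0)"
  unfolding eventually_at_right_field
  by (rule exI[of _ "min 1 (p - 1)"]) (use p in auto)

lemma evU: "eventually (\<lambda>\<epsilon>. 0 < \<epsilon> \<and> \<epsilon> \<le> 1 \<and> \<epsilon> < p - 1) U"
  using evR U(1) by (rule filter_leD[rotated])

lemma GL_conv:
  assumes f: "in_GL p \<theta> (wa p \<theta>) f"
  shows "((\<lambda>\<epsilon>. Lf p \<theta> \<epsilon> f) \<longlongrightarrow> Lim U (\<lambda>\<epsilon>. Lf p \<theta> \<epsilon> f)) U"
    and "\<bar>Lim U (\<lambda>\<epsilon>. Lf p \<theta> \<epsilon> f)\<bar> \<le> GL_norm p \<theta> (wa p \<theta>) f"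
    and "eventually (\<lambda>\<epsilon>. integrable lebesgue (\<lambda>x. f x * wa p \<theta> x powr (\<epsilon> / p))) U"
proof -
  have fm: "f \<in> borel_measurable lebesgue"
    and fi: "\<And>\<epsilon>. \<epsilon> \<in> {0<..p-1} \<Longrightarrow> integrable lebesgue (\<lambda>x. \<bar>f x\<bar> powr (p - \<epsilon>) * wa p \<theta> x powr (\<epsilon> / p))"
    and fb: "bdd_above (gl_term p \<theta> (wa p \<theta>) f ` {0<..p-1})"
    using f unfolding in_GL_def by auto
  have ev: "eventually (\<lambda>\<epsilon>. \<bar>Lf p \<theta> \<epsilon> f\<bar> \<le> GL_norm p \<theta> (wa p \<theta>) f) U"
    using evU
  proof (rule eventually_mono)
    fix \<epsilon> assume e: "0 < \<epsilon> \<and> \<epsilon> \<le> 1 \<and> \<epsilon> < p - 1"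
    then have eI: "\<epsilon> \<in> {0<..p-1}" by simp
    have "\<bar>Lf p \<theta> \<epsilon> f\<bar> \<le> gl_term p \<theta> (wa p \<theta>) f \<epsilon>"
      using e by (intro L_bound(2)[OF p th _ _ fm fi[OF eI]]) auto
    also have "\<dots> \<le> GL_norm p \<theta> (wa p \<theta>) f"
      unfolding GL_norm_def by (rule cSUP_upper[OF eI fb])
    finally show "\<bar>Lf p \<theta> \<epsilon> f\<bar> \<le> GL_norm p \<theta> (wa p \<theta>) f" .
  qed
  obtain l where l: "((\<lambda>\<epsilon>. Lf p \<theta> \<epsilon> f) \<longlongrightarrow> l) U"
    using ultra_converges[OF U(2) ev] by blast
  have Ll: "Lim U (\<lambda>\<epsilon>. Lf p \<theta> \<epsilon> f) = l" by (rule tendsto_Lim[OF Ub l])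
  show "((\<lambda>\<epsilon>. Lf p \<theta> \<epsilon> f) \<longlongrightarrow> Lim U (\<lambda>\<epsilon>. Lf p \<theta> \<epsilon> f)) U" using l Ll by simp
  show "\<bar>Lim U (\<lambda>\<epsilon>. Lf p \<theta> \<epsilon> f)\<bar> \<le> GL_norm p \<theta> (wa p \<theta>) f"
    unfolding Ll by (rule tendsto_upperbound[OF tendsto_rabs[OF l] ev Ub])
  show "eventually (\<lambda>\<epsilon>. integrable lebesgue (\<lambda>x. f x * wa p \<theta> x powr (\<epsilon> / p))) U"
    using evU
  proof (rule eventually_mono)
    fix \<epsilon> assume e: "0 < \<epsilon> \<and> \<epsilon> \<le> 1 \<and> \<epsilon> < p - 1"
    then have eI: "\<epsilon> \<in> {0<..p-1}" by simp
    show "integrable lebesgue (\<lambda>x. f x * wa p \<theta> x powr (\<epsilon> / p))"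
      using e by (intro L_bound(1)[OF p th _ _ fm fi[OF eI]]) auto
  qed
qed

lemma Phi_dual: "in_dual p \<theta> (wa p \<theta>) (\<lambda>f. Lim U (\<lambda>\<epsilon>. Lf p \<theta> \<epsilon> f))"
  unfolding in_dual_def
proof (intro conjI allI impI)
  fix f g assume f: "in_GL p \<theta> (wa p \<theta>) f" and g: "in_GL p \<theta> (wa p \<theta>) g"
  have "eventually (\<lambda>\<epsilon>. Lf p \<theta> \<epsilon> (\<lambda>x. f x + g x) = Lf p \<theta> \<epsilon> f + Lf p \<theta> \<epsilon> g) U"
    using GL_conv(3)[OF f] GL_conv(3)[OF g]
  proof (rule eventually_elim2)
    fix \<epsilon> assume fi: "integrable lebesgue (\<lambda>x. f x * wa p \<theta> x powr (\<epsilon> / p))"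
      and gi: "integrable lebesgue (\<lambda>x. g x * wa p \<theta> x powr (\<epsilon> / p))"
    have "(\<integral>x. (f x + g x) * wa p \<theta> x powr (\<epsilon> / p) \<partial>lebesgue)
        = (\<integral>x. f x * wa p \<theta> x powr (\<epsilon> / p) + g x * wa p \<theta> x powr (\<epsilon> / p) \<partial>lebesgue)"
      by (simp add: distrib_right)
    also have "\<dots> = (\<integral>x. f x * wa p \<theta> x powr (\<epsilon> / p) \<partial>lebesgue) + (\<integral>x. g x * wa p \<theta> x powr (\<epsilon> / p) \<partial>lebesgue)"
      by (rule Bochner_Integration.integral_add[OF fi gi])
    finally show "Lf p \<theta> \<epsilon> (\<lambda>x. f x + g x) = Lf p \<theta> \<epsilon> f + Lf p \<theta> \<epsilon> g"
      unfolding Lf_def by (simp add: distrib_left)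
  qed
  moreover have "((\<lambda>\<epsilon>. Lf p \<theta> \<epsilon> f + Lf p \<theta> \<epsilon> g) \<longlongrightarrow>
      Lim U (\<lambda>\<epsilon>. Lf p \<theta> \<epsilon> f) + Lim U (\<lambda>\<epsilon>. Lf p \<theta> \<epsilon> g)) U"
    by (intro tendsto_add GL_conv(1) f g)
  ultimately have "((\<lambda>\<epsilon>. Lf p \<theta> \<epsilon> (\<lambda>x. f x + g x)) \<longlongrightarrow>
      Lim U (\<lambda>\<epsilon>. Lf p \<theta> \<epsilon> f) + Lim U (\<lambda>\<epsilon>. Lf p \<theta> \<epsilon> g)) U"
    by (simp add: tendsto_cong)
  then show "Lim U (\<lambda>\<epsilon>. Lf p \<theta> \<epsilon> (\<lambda>x. f x + g x))
      = Lim U (\<lambda>\<epsilon>. Lf p \<theta> \<epsilon> f) + Lim U (\<lambda>\<epsilon>. Lf p \<theta> \<epsilon> g)"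
    by (rule tendsto_Lim[OF Ub])
next
  fix f and c :: real assume f: "in_GL p \<theta> (wa p \<theta>) f"
  have eq: "(\<lambda>\<epsilon>. Lf p \<theta> \<epsilon> (\<lambda>x. c * f x)) = (\<lambda>\<epsilon>. c * Lf p \<theta> \<epsilon> f)"
    unfolding Lf_def by (simp add: mult.assoc mult.left_commute)
  have "((\<lambda>\<epsilon>. c * Lf p \<theta> \<epsilon> f) \<longlongrightarrow> c * Lim U (\<lambda>\<epsilon>. Lf p \<theta> \<epsilon> f)) U"
    by (intro tendsto_mult_left GL_conv(1) f)
  then show "Lim U (\<lambda>\<epsilon>. Lf p \<theta> \<epsilon> (\<lambda>x. c * f x)) = c * Lim U (\<lambda>\<epsilon>. Lf p \<theta> \<epsilon> f)"
    unfolding eq by (rule tendsto_Lim[OF Ub])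
next
  show "\<exists>C. \<forall>f. in_GL p \<theta> (wa p \<theta>) f \<longrightarrow> \<bar>Lim U (\<lambda>\<epsilon>. Lf p \<theta> \<epsilon> f)\<bar> \<le> C * GL_norm p \<theta> (wa p \<theta>) f"
    by (rule exI[of _ 1]) (auto dest: GL_conv(2))
qed

lemma Phi_one_pos: "0 < Lim U (\<lambda>\<epsilon>. Lf p \<theta> \<epsilon> (\<lambda>x. 1))"
proof -
  have "eventually (\<lambda>\<epsilon>. exp (- \<bar>lnK p \<theta>\<bar>) \<le> Lf p \<theta> \<epsilon> (\<lambda>x. 1)) U"
    using evU
  proof (rule eventually_mono)
    fix \<epsilon> assume e: "0 < \<epsilon> \<and> \<epsilon> \<le> 1 \<and> \<epsilon> < p - 1"
    then show "exp (- \<bar>lnK p \<theta>\<bar>) \<le> Lf p \<theta> \<epsilon> (\<lambda>x. 1)"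
      using L_one[OF p th, of \<epsilon>] gl_one_lower[OF p th, of \<epsilon>] by simp
  qed
  then have "exp (- \<bar>lnK p \<theta>\<bar>) \<le> Lim U (\<lambda>\<epsilon>. Lf p \<theta> \<epsilon> (\<lambda>x. 1))"
    by (intro tendsto_lowerbound[OF GL_conv(1)[OF in_GL_one[OF p th]] _ Ub])
  then show ?thesis by (smt (verit) exp_gt_zero)
qed

lemma Phi_nonrep:
  "\<not> (\<exists>g. in_assoc p \<theta> (wa p \<theta>) g \<and>
        (\<forall>f. in_GL p \<theta> (wa p \<theta>) f \<longrightarrow> Lim U (\<lambda>\<epsilon>. Lf p \<theta> \<epsilon> f) = (\<integral>x. f x * g x \<partial>lebesgue)))"
proof
  assume "\<exists>g. in_assoc p \<theta> (wa p \<theta>) g \<and>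
        (\<forall>f. in_GL p \<theta> (wa p \<theta>) f \<longrightarrow> Lim U (\<lambda>\<epsilon>. Lf p \<theta> \<epsilon> f) = (\<integral>x. f x * g x \<partial>lebesgue))"
  then obtain g where ga: "in_assoc p \<theta> (wa p \<theta>) g"
    and rep: "\<And>f. in_GL p \<theta> (wa p \<theta>) f \<Longrightarrow> Lim U (\<lambda>\<epsilon>. Lf p \<theta> \<epsilon> f) = (\<integral>x. f x * g x \<partial>lebesgue)"
    by blast
  have gm[measurable]: "g \<in> borel_measurable lebesgue" using ga unfolding in_assoc_def by simp
  have gint: "\<And>f. in_GL p \<theta> (wa p \<theta>) f \<Longrightarrow> GL_norm p \<theta> (wa p \<theta>) f \<le> 1 \<Longrightarrow> integrable lebesgue (\<lambda>x. f x * g x)"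
    using ga unfolding in_assoc_def by blast
  note wam[measurable] = wa_meas[OF p th]
  define M0 where "M0 = max 1 (C0 p \<theta>)"
  have M0: "1 \<le> M0" unfolding M0_def by simp
  have pt: "0 < (p - 1) powr \<theta>" using p by simp
  define c1 where "c1 = 1 / ((p - 1) powr \<theta> * M0)"
  have c1: "0 < c1" unfolding c1_def using pt M0 by simp
  define f1 where "f1 = (\<lambda>x. c1 * (sgn (g x) * wa p \<theta> x))"
  have f1m: "f1 \<in> borel_measurable lebesgue" unfolding f1_def by measurable
  have f1b: "\<bar>f1 x\<bar> \<le> c1 * wa p \<theta> x" for x
  proof -
    have "\<bar>sgn (g x)\<bar> \<le> 1" by (simp add: abs_sgn_eq)
    then have "\<bar>sgn (g x)\<bar> * wa p \<theta> x \<le> 1 * wa p \<theta> x"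
      using wa_pos[OF p th, of x] by (intro mult_right_mono) auto
    then show ?thesis unfolding f1_def using c1 wa_pos[OF p th, of x]
      by (simp add: abs_mult mult_left_mono)
  qed
  have gl1: "gl_term p \<theta> (wa p \<theta>) f1 \<epsilon> \<le> \<epsilon> powr \<theta> * c1 * M0" if "0 < \<epsilon>" "\<epsilon> \<le> p - 1" for \<epsilon>
    unfolding M0_def by (rule small_f(2)[OF p th f1m _ f1b that]) (use c1 in simp)
  have gl1': "gl_term p \<theta> (wa p \<theta>) f1 \<epsilon> \<le> 1" if e: "0 < \<epsilon>" "\<epsilon> \<le> p - 1" for \<epsilon>
  proof -
    have "\<epsilon> powr \<theta> \<le> (p - 1) powr \<theta>" using e th by (intro powr_mono2) auto
    then have "\<epsilon> powr \<theta> * (c1 * M0) \<le> (p - 1) powr \<theta> * (c1 * M0)"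
      using c1 M0 by (intro mult_right_mono) auto
    also have "\<dots> = 1" unfolding c1_def using pt M0 by simp
    finally show ?thesis using gl1[OF e] by (simp add: mult.assoc)
  qed
  have f1GL: "in_GL p \<theta> (wa p \<theta>) f1"
    unfolding in_GL_def
  proof (intro conjI ballI f1m)
    fix \<epsilon> assume "\<epsilon> \<in> {0<..p - 1}"
    then show "integrable lebesgue (\<lambda>x. \<bar>f1 x\<bar> powr (p - \<epsilon>) * wa p \<theta> x powr (\<epsilon> / p))"
      by (intro small_f(1)[OF p th f1m _ f1b]) (use c1 in auto)
  next
    show "bdd_above (gl_term p \<theta> (wa p \<theta>) f1 ` {0<..p - 1})"
      by (rule bdd_aboveI[of _ 1]) (auto intro!: gl1')
  qed
  have f1N: "GL_norm p \<theta> (wa p \<theta>) f1 \<le> 1"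
    unfolding GL_norm_def using p by (intro cSUP_least) (auto intro!: gl1')
  have "((\<lambda>\<epsilon>. Lf p \<theta> \<epsilon> f1) \<longlongrightarrow> 0) (at_right 0)"
  proof (rule Lim_null_comparison)
    show "eventually (\<lambda>\<epsilon>. norm (Lf p \<theta> \<epsilon> f1) \<le> \<epsilon> powr \<theta> * c1 * M0) (at_right 0)"
      using evR
    proof (rule eventually_mono)
      fix \<epsilon> assume e: "0 < \<epsilon> \<and> \<epsilon> \<le> 1 \<and> \<epsilon> < p - 1"
      then have "\<bar>Lf p \<theta> \<epsilon> f1\<bar> \<le> gl_term p \<theta> (wa p \<theta>) f1 \<epsilon>"
        using f1GL unfolding in_GL_def by (intro L_bound(2)[OF p th _ _ f1m]) auto
      also have "\<dots> \<le> \<epsilon> powr \<theta> * c1 * M0" using e by (intro gl1) auto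
      finally show "norm (Lf p \<theta> \<epsilon> f1) \<le> \<epsilon> powr \<theta> * c1 * M0" by simp
    qed
    have pw: "((\<lambda>\<epsilon>::real. \<epsilon> powr \<theta>) \<longlongrightarrow> 0) (at_right 0)"
      by (rule tendsto_zero_powrI) (auto intro: th eventually_at_rightI[of 0 1])
    show "((\<lambda>\<epsilon>. \<epsilon> powr \<theta> * c1 * M0) \<longlongrightarrow> 0) (at_right 0)"
      using tendsto_mult[OF tendsto_mult[OF pw tendsto_const[of c1]] tendsto_const[of M0]] by simp
  qed
  then have "((\<lambda>\<epsilon>. Lf p \<theta> \<epsilon> f1) \<longlongrightarrow> 0) U" by (rule tendsto_mono[OF U(1)])
  then have "Lim U (\<lambda>\<epsilon>. Lf p \<theta> \<epsilon> f1) = 0" by (rule tendsto_Lim[OF Ub])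
  then have z: "(\<integral>x. f1 x * g x \<partial>lebesgue) = 0" using rep[OF f1GL] by simp
  have fgi: "integrable lebesgue (\<lambda>x. f1 x * g x)" by (rule gint[OF f1GL f1N])
  have fgeq: "f1 x * g x = c1 * wa p \<theta> x * \<bar>g x\<bar>" for x
    unfolding f1_def by (simp add: abs_sgn[of "g x"] mult.commute mult.left_commute)
  have nn: "AE x in lebesgue. 0 \<le> f1 x * g x"
    unfolding fgeq using c1 wa_pos[OF p th] by (intro AE_I2) (simp add: less_imp_le)
  have "AE x in lebesgue. f1 x * g x = 0"
    using integral_nonneg_eq_0_iff_AE[OF fgi nn] z by simp
  then have "AE x in lebesgue. 1 * g x = 0"
  proof (rule AE_mp)
    have wnz: "wa p \<theta> x \<noteq> 0" for x using wa_pos[OF p th, of x] by simp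
    show "AE x in lebesgue. f1 x * g x = 0 \<longrightarrow> 1 * g x = 0"
      using c1 by (intro AE_I2) (simp add: fgeq wnz)
  qed
  then have "(\<integral>x. 1 * g x \<partial>lebesgue) = 0" by (rule integral_eq_zero_AE)
  then have "Lim U (\<lambda>\<epsilon>. Lf p \<theta> \<epsilon> (\<lambda>x. 1)) = 0" using rep[OF in_GL_one[OF p th]] by simp
  with Phi_one_pos show False by simp
qed

end

theorem corollary3:
  fixes p \<theta> :: real
  assumes "1 < p" and "0 < \<theta>"
  shows "\<exists>a. weight a \<and> \<not> canonically_isometric p \<theta> a"
proof -
  obtain U :: "real filter" where U: "U \<le> at_right 0" "ultra U"
    using ex_ultra[of "at_right (0::real)"] by auto
  show ?thesis
  proof (intro exI conjI)
    show "weight (wa p \<theta>)" by (rule weight_wa[OF assms])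
    show "\<not> canonically_isometric p \<theta> (wa p \<theta>)"
    proof
      assume "canonically_isometric p \<theta> (wa p \<theta>)"
      then have "\<exists>g. in_assoc p \<theta> (wa p \<theta>) g \<and>
        (\<forall>f. in_GL p \<theta> (wa p \<theta>) f \<longrightarrow> Lim U (\<lambda>\<epsilon>. Lf p \<theta> \<epsilon> f) = (\<integral>x. f x * g x \<partial>lebesgue))"
        using Phi_dual[OF assms U] unfolding canonically_isometric_def by blast
      with Phi_nonrep[OF assms U] show False by blast
    qed
  qed
qed


end
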